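(* Let $n$ be a positive integer, let $\mathcal{K}$ be a finite subset of $\mathbb{Z}_+^n$ containing $\mathbf{0}=(0,\ldots,0)$, and let $(s_{\mathbf{k}})_{\mathbf{k}\in\mathcal{K}}$ be complex numbers. There exists a (non-negative) measure $\mu$ on the Borel $\sigma$-algebra $\mathfrak{B}(\mathbb{C}^n)$ such that $$\int_{\mathbb{C}^n} \mathbf{z}^{\mathbf{k}}\, d\mu(\mathbf{z}) = s_{\mathbf{k}}\qquad \text{for all } \mathbf{k}\in\mathcal{K}$$ if and only if one of the following conditions holds: (a) $s_{\mathbf{0}}>0$; (b) $s_{\mathbf{k}}=0$ for all $\mathbf{k}\in\mathcal{K}$. Moreover, if one of conditions (a), (b) is satisfied, then there exists such a measure $\mu$ with compact support.
   Context: $\mathbb{Z}_+$ denotes the set of non-negative integers. For $\mathbf{k}=(k_1,\ldots,k_n)\in\mathbb{Z}_+^n$ and $\mathbf{z}=(z_1,\ldots,z_n)\in\mathbb{C}^n$, $\mathbf{z}^{\mathbf{k}}$ denotes the monomial $z_1^{k_1}\cdots z_n^{k_n}$ (no complex conjugates appear). A measure here means a non-negative measure on the Borel sets of $\mathbb{C}^n$, with respect to which the monomials $\mathbf{z}^{\mathbf{k}}$, $\mathbf{k}\in\mathcal{K}$, are integrable. *)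

theory Defs
  imports "HOL-Analysis.Analysis"
begin

text \<open>Points of C^n are modelled as complex^'n (dimension n = CARD('n) \<ge> 1),
multi-indices in Z_+^n as nat^'n.\<close>

definition monomial :: "nat ^ 'n::finite \<Rightarrow> complex ^ 'n \<Rightarrow> complex" where
  "monomial k z = (\<Prod>i\<in>UNIV. (z $ i) ^ (k $ i))"

definition measure_support :: "(complex ^ 'n::finite) measure \<Rightarrow> (complex ^ 'n) set" where
  "measure_support \<mu> = {z. \<forall>e>0. emeasure \<mu> (ball z e) \<noteq> 0}"

definition solves_moments ::
  "(nat ^ 'n::finite) set \<Rightarrow> (nat ^ 'n \<Rightarrow> complex) \<Rightarrow> (complex ^ 'n) measure \<Rightarrow> bool" where
  "solves_moments K s \<mu> \<longleftrightarrow> sets \<mu> = sets borel \<and>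
     (\<forall>k\<in>K. integrable \<mu> (monomial k) \<and> integral\<^sup>L \<mu> (monomial k) = s k)"

end

theory Submission
  imports Defs
begin

lemma monomial_borel[measurable]: "monomial k \<in> borel_measurable borel"
proof -
  have "continuous_on UNIV (monomial k)"
    unfolding monomial_def by (intro continuous_intros)
  thus ?thesis by (rule borel_measurable_continuous_onI)
qed

lemma discrete_measure:
  fixes I :: "'i set" and p :: "'i \<Rightarrow> complex ^ 'n::finite" and w :: "'i \<Rightarrow> real"
  assumes I: "finite I" and w: "\<And>i. i \<in> I \<Longrightarrow> w i \<ge> 0"
    and mom: "\<And>k. k \<in> K \<Longrightarrow> (\<Sum>i\<in>I. of_real (w i) * monomial k (p i)) = s k"
  shows "\<exists>\<mu>. solves_moments K s \<mu> \<and> compact (measure_support \<mu>)"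
proof -
  define M where "M = density (count_space I) (\<lambda>i. ennreal (w i))"
  define \<mu> where "\<mu> = distr M borel p"
  have pm: "p \<in> measurable M borel" unfolding M_def by simp
  have sp: "space M = I" unfolding M_def by simp
  have AE: "AE x in count_space I. 0 \<le> w x"
    by (rule AE_I2) (use w in auto)
  have "solves_moments K s \<mu>"
    unfolding solves_moments_def
  proof (intro conjI ballI)
    show "sets \<mu> = sets borel" unfolding \<mu>_def by simp
    fix k assume k: "k \<in> K"
    have "integrable M (\<lambda>x. monomial k (p x))"
      unfolding M_def
      by (subst integrable_density) (auto intro: integrable_count_space I AE)
    then show "integrable \<mu> (monomial k)"
      unfolding \<mu>_def using pm by (subst integrable_distr_eq) auto
    have "integral\<^sup>L \<mu> (monomial k) = integral\<^sup>L M (\<lambda>x. monomial k (p x))"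
      unfolding \<mu>_def using pm by (subst integral_distr) auto
    also have "\<dots> = (\<Sum>i\<in>I. w i *\<^sub>R monomial k (p i))"
      unfolding M_def using I AE
      by (subst integral_density) (auto simp: lebesgue_integral_count_space_finite)
    also have "\<dots> = s k" using mom[OF k] by (simp add: scaleR_conv_of_real)
    finally show "integral\<^sup>L \<mu> (monomial k) = s k" .
  qed
  moreover have "measure_support \<mu> \<subseteq> p ` I"
  proof
    fix z assume z: "z \<in> measure_support \<mu>"
    show "z \<in> p ` I"
    proof (rule ccontr)
      assume nz: "z \<notin> p ` I"
      obtain d where d: "d > 0" "\<And>x. x \<in> p ` I \<Longrightarrow> x \<noteq> z \<Longrightarrow> d \<le> dist z x"
        using finite_set_avoid[of "p ` I" z] I by blast
      have "p -` ball z d \<inter> space M = {}"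
        using d nz sp by (fastforce simp: dist_commute)
      hence "emeasure \<mu> (ball z d) = 0"
        unfolding \<mu>_def using pm by (subst emeasure_distr) auto
      thus False using z d unfolding measure_support_def by auto
    qed
  qed
  hence "compact (measure_support \<mu>)"
    using I by (meson finite_imageI finite_imp_compact finite_subset)
  ultimately show ?thesis by blast
qed


definition rt :: "nat \<Rightarrow> nat \<Rightarrow> complex" where
  "rt N a = exp (2 * of_real pi * \<i> * of_nat a / of_nat N)"

lemma rt_add: "rt N (a + b) = rt N a * rt N b"
  unfolding rt_def by (simp add: add_divide_distrib distrib_left exp_add)

lemma rt_pow: "rt N a ^ m = rt N (a * m)"
  unfolding rt_def by (simp add: exp_of_nat_mult[symmetric] algebra_simps)

lemma rt_powN: "N \<ge> 1 \<Longrightarrow> rt N a ^ N = 1"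
  unfolding rt_def using complex_root_unity[of N a] by simp

lemma rt_eq1: "N \<ge> 1 \<Longrightarrow> rt N a = 1 \<longleftrightarrow> N dvd a"
  unfolding rt_def by (rule complex_root_unity_eq_1)

lemma rt_eq: "N \<ge> 1 \<Longrightarrow> rt N a = rt N b \<longleftrightarrow> a mod N = b mod N"
  unfolding rt_def by (rule complex_root_unity_eq)

lemma rt_cnj: "cnj (rt N a) * rt N a = 1"
proof -
  have "cnj (rt N a) = exp (- (2 * of_real pi * \<i> * of_nat a / of_nat N))"
    unfolding rt_def exp_cnj by simp
  thus ?thesis unfolding rt_def by (simp add: exp_minus_inverse exp_add[symmetric])
qed

lemma rt_norm: "norm (rt N a) = 1"
  unfolding rt_def by (simp add: norm_exp_eq_Re)

lemma geo_root: fixes c :: complex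
  assumes "N \<ge> 1" "c ^ N = 1"
  shows "(\<Sum>a<N. c ^ a) = (if c = 1 then of_nat N else 0)"
  using assms by (simp add: sum_gp_strict)

lemma prod_root_sum:
  fixes c :: "'n::finite \<Rightarrow> complex"
  assumes N: "N \<ge> 1" and c: "\<And>i. c i ^ N = 1"
  shows "(\<Sum>g\<in>PiE UNIV (\<lambda>_. {..<N}). \<Prod>i\<in>UNIV. c i ^ g i)
         = (if (\<forall>i. c i = 1) then of_nat N ^ CARD('n) else 0)"
proof -
  have "(\<Sum>g\<in>PiE UNIV (\<lambda>_. {..<N}). \<Prod>i\<in>UNIV. c i ^ g i) = (\<Prod>i\<in>UNIV. \<Sum>a<N. c i ^ a)"
    by (rule prod_sum_PiE[symmetric]) auto
  also have "\<dots> = (\<Prod>i\<in>UNIV. if c i = 1 then of_nat N else 0)"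
    using geo_root[OF N c] by simp
  also have "\<dots> = (if (\<forall>i. c i = 1) then of_nat N ^ CARD('n) else 0)"
    by (auto simp: prod_constant)
  finally show ?thesis .
qed

definition E :: "nat \<Rightarrow> nat ^ 'n::finite \<Rightarrow> ('n \<Rightarrow> nat) \<Rightarrow> complex" where
  "E N k g = (\<Prod>i\<in>UNIV. rt N (k$i) ^ g i)"

definition P :: "nat \<Rightarrow> real \<Rightarrow> ('n::finite \<Rightarrow> nat) \<Rightarrow> complex ^ 'n" where
  "P N r g = (\<chi> i. of_real r * rt N (g i))"

definition W :: "nat \<Rightarrow> complex \<Rightarrow> nat ^ 'n::finite \<Rightarrow> ('n \<Rightarrow> nat) \<Rightarrow> real" where
  "W N v k g = 1 + Re (v * E N k g)"

lemma monomial_P: "monomial j (P N r g) = (\<Prod>i\<in>UNIV. of_real r ^ (j$i)) * E N j g"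
proof -
  have "\<And>i. (of_real r * rt N (g i)) ^ (j$i) = of_real r ^ (j$i) * rt N (j$i) ^ g i"
    by (simp add: power_mult_distrib rt_pow mult.commute)
  thus ?thesis unfolding monomial_def P_def E_def by (simp add: prod.distrib)
qed

lemma norm_E: "norm (E N k g) = 1"
  unfolding E_def by (simp add: prod_norm[symmetric] norm_power rt_norm)

lemma W_nonneg: "norm v \<le> 1 \<Longrightarrow> W N v k g \<ge> 0"
proof -
  assume v: "norm v \<le> 1"
  have "norm (v * E N k g) \<le> 1" using v by (simp add: norm_mult norm_E)
  moreover have "- norm (v * E N k g) \<le> Re (v * E N k g)"
    using abs_Re_le_cmod[of "v * E N k g"] by linarith
  ultimately show ?thesis unfolding W_def by linarith
qed

lemma torus_sum:
  fixes j k :: "nat ^ 'n::finite"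
  assumes N: "N \<ge> 1" and jk: "\<And>i. j$i + k$i < N" and k: "k \<noteq> 0"
  shows "(\<Sum>g\<in>PiE UNIV (\<lambda>_. {..<N}). of_real (W N v k g) * E N j g)
     = of_nat N ^ CARD('n) * ((if j = 0 then 1 else 0) + (if j = k then cnj v / 2 else 0))"
proof -
  define G where "G = PiE (UNIV::'n set) (\<lambda>_. {..<N})"
  have W: "of_real (W N v k g) * E N j g =
      (\<Prod>i\<in>UNIV. rt N (j$i) ^ g i)
      + v / 2 * (\<Prod>i\<in>UNIV. (rt N (k$i) * rt N (j$i)) ^ g i)
      + cnj v / 2 * (\<Prod>i\<in>UNIV. (cnj (rt N (k$i)) * rt N (j$i)) ^ g i)" for g
  proof -
    define e where "e = E N k g"
    define f where "f = E N j g"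
    have "complex_of_real (Re (v * e)) = (v * e + cnj (v * e)) / 2"
      using complex_add_cnj[of "v * e"] by simp
    hence 1: "of_real (W N v k g) * f = f + v / 2 * (e * f) + cnj v / 2 * (cnj e * f)"
      unfolding W_def e_def[symmetric] by (simp add: algebra_simps add_divide_distrib)
    have 2: "cnj e = (\<Prod>i\<in>UNIV. cnj (rt N (k$i)) ^ g i)"
      unfolding e_def E_def by (simp add: cnj_prod)
    have 3: "e * f = (\<Prod>i\<in>UNIV. (rt N (k$i) * rt N (j$i)) ^ g i)"
      unfolding e_def f_def E_def by (simp add: prod.distrib[symmetric] power_mult_distrib)
    have 4: "cnj e * f = (\<Prod>i\<in>UNIV. (cnj (rt N (k$i)) * rt N (j$i)) ^ g i)"
      unfolding 2 f_def E_def by (simp add: prod.distrib[symmetric] power_mult_distrib)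
    have 5: "f = (\<Prod>i\<in>UNIV. rt N (j$i) ^ g i)" unfolding f_def E_def ..
    show ?thesis using 1[unfolded 3 4, unfolded f_def] unfolding E_def by simp
  qed
  have c1: "(\<forall>i. rt N (j$i) = 1) \<longleftrightarrow> j = 0"
  proof -
    have "N dvd j$i \<longleftrightarrow> j$i = 0" for i
      using jk[of i] by (metis add_lessD1 dvd_0_right dvd_imp_le linorder_not_less not_gr0)
    thus ?thesis by (simp add: rt_eq1[OF N] vec_eq_iff)
  qed
  have c2: "\<not> (\<forall>i. rt N (k$i) * rt N (j$i) = 1)"
  proof
    assume a: "\<forall>i. rt N (k$i) * rt N (j$i) = 1"
    obtain i where "k$i \<noteq> 0" using k by (auto simp: vec_eq_iff)
    moreover have "N dvd k$i + j$i" using a rt_eq1[OF N, of "k$i + j$i"] by (simp add: rt_add)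
    ultimately show False using jk[of i] by (auto dest: dvd_imp_le)
  qed
  have c3: "(\<forall>i. cnj (rt N (k$i)) * rt N (j$i) = 1) \<longleftrightarrow> j = k"
  proof -
    have "cnj (rt N (k$i)) * rt N (j$i) = 1 \<longleftrightarrow> j$i = k$i" for i
    proof -
      have "cnj (rt N (k$i)) * rt N (j$i) = 1 \<longleftrightarrow> rt N (j$i) = rt N (k$i)"
        by (metis mult.commute mult.left_neutral mult.assoc rt_cnj)
      also have "\<dots> \<longleftrightarrow> j$i = k$i" using jk[of i] by (simp add: rt_eq[OF N])
      finally show ?thesis .
    qed
    thus ?thesis by (simp add: vec_eq_iff)
  qed
  have p1: "\<And>i. rt N (j$i) ^ N = 1" "\<And>i. (rt N (k$i) * rt N (j$i)) ^ N = 1"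
    "\<And>i. (cnj (rt N (k$i)) * rt N (j$i)) ^ N = 1"
    by (simp_all add: power_mult_distrib rt_powN[OF N] flip: complex_cnj_power)
  have s1: "(\<Sum>g\<in>PiE UNIV (\<lambda>_. {..<N}). \<Prod>i\<in>UNIV. rt N (j$i) ^ g i)
      = (if j = 0 then of_nat N ^ CARD('n) else 0)"
    using prod_root_sum[of N "\<lambda>i. rt N (j$i)"] N p1(1) c1 by simp
  have s2: "(\<Sum>g\<in>PiE UNIV (\<lambda>_. {..<N}). \<Prod>i\<in>UNIV. (rt N (k$i) * rt N (j$i)) ^ g i) = 0"
    using prod_root_sum[of N "\<lambda>i. rt N (k$i) * rt N (j$i)"] N p1(2) c2 by simp
  have s3: "(\<Sum>g\<in>PiE UNIV (\<lambda>_. {..<N}). \<Prod>i\<in>UNIV. (cnj (rt N (k$i)) * rt N (j$i)) ^ g i)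
      = (if j = k then of_nat N ^ CARD('n) else 0)"
    using prod_root_sum[of N "\<lambda>i. cnj (rt N (k$i)) * rt N (j$i)"] N p1(3) c3 by simp
  show ?thesis
    unfolding W sum.distrib sum_distrib_left[symmetric] s1 s2 s3
    by (simp add: algebra_simps)
qed

lemma rho_ge:
  fixes k :: "nat ^ 'n::finite" and r :: real
  assumes k: "k \<noteq> 0" and r: "r \<ge> 1"
  shows "(\<Prod>i\<in>UNIV. r ^ (k$i)) \<ge> r"
proof -
  obtain i0 where i0: "k$i0 \<noteq> 0" using k by (auto simp: vec_eq_iff)
  have "1 \<le> k$i0" using i0 by simp
  also have "k$i0 \<le> (\<Sum>i\<in>UNIV. k$i)" by (rule member_le_sum) auto
  finally have "r ^ 1 \<le> r ^ (\<Sum>i\<in>UNIV. k$i)" using r by (rule power_increasing)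
  thus ?thesis by (simp add: power_sum)
qed

lemma atom_family:
  fixes k :: "nat ^ 'n::finite" and c :: complex
  assumes N: "N \<ge> 1" and k: "k \<noteq> 0" and \<beta>: "\<beta> > 0"
  shows "\<exists>r v. norm v \<le> 1 \<and> (\<forall>j. (\<forall>i. j$i + k$i < N) \<longrightarrow>
     (\<Sum>g\<in>PiE UNIV (\<lambda>_. {..<N}). of_real (\<beta> / of_nat N ^ CARD('n) * W N v k g) * monomial j (P N r g))
      = (if j = 0 then of_real \<beta> else 0) + (if j = k then c else 0))"
proof -
  define r where "r = 1 + 2 * norm c / \<beta>"
  have r1: "r \<ge> 1" unfolding r_def using \<beta> by simp
  define R where "R = (\<Prod>i\<in>UNIV. r ^ (k$i))"
  have Rr: "R \<ge> r" unfolding R_def by (rule rho_ge[OF k r1])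
  have Rpos: "R > 0" using Rr r1 by simp
  define v where "v = cnj (2 * c / (of_real \<beta> * of_real R))"
  have "norm v = 2 * norm c / (\<beta> * R)"
    unfolding v_def using \<beta> Rpos by (simp add: norm_divide norm_mult)
  also have "\<dots> \<le> 1"
  proof -
    have "2 * norm c \<le> \<beta> * r" unfolding r_def using \<beta> by (simp add: field_simps)
    also have "\<dots> \<le> \<beta> * R" using Rr \<beta> by simp
    finally show ?thesis using \<beta> Rpos by simp
  qed
  finally have v1: "norm v \<le> 1" .
  have "(\<Sum>g\<in>PiE UNIV (\<lambda>_. {..<N}). of_real (\<beta> / of_nat N ^ CARD('n) * W N v k g) * monomial j (P N r g))
      = (if j = 0 then of_real \<beta> else 0) + (if j = k then c else 0)"
    if jk: "\<forall>i. j$i + k$i < N" for j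
  proof -
    define \<rho> where "\<rho> = (\<Prod>i\<in>UNIV. (of_real r :: complex) ^ (j$i))"
    have "(\<Sum>g\<in>PiE UNIV (\<lambda>_. {..<N}). of_real (\<beta> / of_nat N ^ CARD('n) * W N v k g) * monomial j (P N r g))
      = of_real \<beta> / of_nat N ^ CARD('n) * \<rho> * (\<Sum>g\<in>PiE UNIV (\<lambda>_. {..<N}). of_real (W N v k g) * E N j g)"
      unfolding monomial_P \<rho>_def sum_distrib_left by (intro sum.cong refl) simp
    also have "\<dots> = of_real \<beta> * \<rho> * ((if j = 0 then 1 else 0) + (if j = k then cnj v / 2 else 0))"
      unfolding torus_sum[OF N jk[rule_format] k] using N by simp
    also have "\<dots> = (if j = 0 then of_real \<beta> else 0) + (if j = k then c else 0)"
    proof (cases "j = k")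
      case True
      hence "j \<noteq> 0" using k by simp
      moreover have "\<rho> = of_real R" unfolding \<rho>_def R_def True by simp
      ultimately show ?thesis using True \<beta> Rpos unfolding v_def by (simp add: field_simps)
    next
      case False
      thus ?thesis by (simp add: \<rho>_def)
    qed
    finally show ?thesis .
  qed
  thus ?thesis using v1 by blast
qed

lemma monomial_zero_pt: "monomial j (0 :: complex ^ 'n::finite) = (if j = 0 then 1 else 0)"
proof (cases "j = 0")
  case True thus ?thesis by (simp add: monomial_def)
next
  case False
  then obtain i0 where "j$i0 \<noteq> 0" by (auto simp: vec_eq_iff)
  hence "(0::complex) ^ (j$i0) = 0" by simp
  hence "(\<Prod>i\<in>UNIV. (0::complex) ^ (j$i)) = 0" by (intro prod_zero) auto
  thus ?thesis using False by (simp add: monomial_def)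
qed

lemma monomial_zero_idx: "monomial 0 z = 1"
  by (simp add: monomial_def)

lemma exists_discrete:
  fixes K :: "(nat ^ 'n::finite) set" and s :: "nat ^ 'n \<Rightarrow> complex"
  assumes K: "finite K" and s0: "s 0 = of_real \<sigma>" and \<sigma>: "\<sigma> > 0"
  shows "\<exists>(I :: ((nat ^ 'n) \<times> ('n \<Rightarrow> nat)) option set) p w. finite I \<and> (\<forall>i\<in>I. w i \<ge> (0::real)) \<and>
     (\<forall>j\<in>K. (\<Sum>i\<in>I. of_real (w i) * monomial j (p i)) = s j)"
proof -
  define D where "D = (\<Sum>k\<in>K. \<Sum>i\<in>UNIV. k$i)"
  define N where "N = 2 * D + 1"
  have N1: "N \<ge> 1" unfolding N_def by simp
  have Dle: "k$i \<le> D" if "k \<in> K" for k i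
  proof -
    have "k$i \<le> (\<Sum>i\<in>UNIV. k$i)" by (rule member_le_sum) auto
    also have "\<dots> \<le> D" unfolding D_def using that K by (intro member_le_sum) auto
    finally show ?thesis .
  qed
  have bnd: "\<forall>i. j$i + k$i < N" if "j \<in> K" "k \<in> K" for j k
    using Dle[OF that(1)] Dle[OF that(2)] unfolding N_def by (metis add_mono le_imp_less_Suc mult_2 add.commute Suc_eq_plus1)
  define K' where "K' = K - {0}"
  define m where "m = card K'"
  define \<beta> where "\<beta> = \<sigma> / (of_nat m + 1)"
  have \<beta>: "\<beta> > 0" unfolding \<beta>_def using \<sigma> by simp
  define G where "G = PiE (UNIV::'n set) (\<lambda>_. {..<N})"
  define Q where "Q = (\<lambda>k rv. norm (snd rv) \<le> 1 \<and> (\<forall>j. (\<forall>i. j$i + k$i < N) \<longrightarrow>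
     (\<Sum>g\<in>G. of_real (\<beta> / of_nat N ^ CARD('n) * W N (snd rv) k g) * monomial j (P N (fst rv) g))
      = (if j = 0 then of_real \<beta> else 0) + (if j = k then s k else 0)))"
  have "\<forall>k\<in>K'. \<exists>rv. Q k rv"
  proof
    fix k assume "k \<in> K'"
    hence "k \<noteq> 0" unfolding K'_def by simp
    from atom_family[OF N1 this \<beta>, of "s k"] obtain r v where
      "norm v \<le> 1 \<and> (\<forall>j. (\<forall>i. j$i + k$i < N) \<longrightarrow>
     (\<Sum>g\<in>PiE UNIV (\<lambda>_. {..<N}). of_real (\<beta> / of_nat N ^ CARD('n) * W N v k g) * monomial j (P N r g))
      = (if j = 0 then of_real \<beta> else 0) + (if j = k then s k else 0))" by blast
    hence "Q k (r, v)" unfolding Q_def G_def by simp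
    thus "\<exists>rv. Q k rv" by blast
  qed
  then obtain f where f: "\<And>k. k \<in> K' \<Longrightarrow> Q k (f k)" by metis
  define I :: "((nat ^ 'n) \<times> ('n \<Rightarrow> nat)) option set" where "I = insert None (Some ` (K' \<times> G))"
  define p :: "((nat ^ 'n) \<times> ('n \<Rightarrow> nat)) option \<Rightarrow> complex ^ 'n" where "p = (\<lambda>x. case x of None \<Rightarrow> 0 | Some (k, g) \<Rightarrow> P N (fst (f k)) g)"
  define w :: "((nat ^ 'n) \<times> ('n \<Rightarrow> nat)) option \<Rightarrow> real" where "w = (\<lambda>x. case x of None \<Rightarrow> \<sigma> - of_nat m * \<beta>
     | Some (k, g) \<Rightarrow> \<beta> / of_nat N ^ CARD('n) * W N (snd (f k)) k g)"
  have finK': "finite K'" unfolding K'_def using K by simp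
  have finG: "finite G" unfolding G_def by (simp add: finite_PiE)
  have finI: "finite I" unfolding I_def using finK' finG by simp
  have wnn: "\<forall>i\<in>I. w i \<ge> 0"
  proof
    fix x assume "x \<in> I"
    then consider "x = None" | k g where "k \<in> K'" "x = Some (k, g)" unfolding I_def by auto
    thus "w x \<ge> 0"
    proof cases
      case 1
      have "of_nat m * \<beta> \<le> \<sigma>" unfolding \<beta>_def using \<sigma> by (simp add: field_simps)
      thus ?thesis using 1 unfolding w_def by simp
    next
      case 2
      have "norm (snd (f k)) \<le> 1" using f[OF 2(1)] unfolding Q_def by simp
      hence "W N (snd (f k)) k g \<ge> 0" by (rule W_nonneg)
      thus ?thesis using 2 \<beta> unfolding w_def by simp
    qed
  qed
  have mom: "(\<Sum>i\<in>I. of_real (w i) * monomial j (p i)) = s j" if j: "j \<in> K" for j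
  proof -
    have "(\<Sum>i\<in>I. of_real (w i) * monomial j (p i)) =
        of_real (\<sigma> - of_nat m * \<beta>) * monomial j 0 +
        (\<Sum>x\<in>K' \<times> G. of_real (w (Some x)) * monomial j (p (Some x)))"
      unfolding I_def using finK' finG
      by (subst sum.insert) (auto simp: sum.reindex w_def p_def)
    also have "(\<Sum>x\<in>K' \<times> G. of_real (w (Some x)) * monomial j (p (Some x)))
       = (\<Sum>k\<in>K'. \<Sum>g\<in>G. of_real (\<beta> / of_nat N ^ CARD('n) * W N (snd (f k)) k g) * monomial j (P N (fst (f k)) g))"
      unfolding sum.cartesian_product by (simp add: w_def p_def split_def)
    also have "\<dots> = (\<Sum>k\<in>K'. (if j = 0 then of_real \<beta> else 0) + (if j = k then s k else 0))"
    proof (rule sum.cong[OF refl])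
      fix k assume k: "k \<in> K'"
      have "k \<in> K" using k unfolding K'_def by simp
      with f[OF k] bnd[OF j this] show "(\<Sum>g\<in>G. of_real (\<beta> / of_nat N ^ CARD('n) * W N (snd (f k)) k g) * monomial j (P N (fst (f k)) g))
        = (if j = 0 then of_real \<beta> else 0) + (if j = k then s k else 0)"
        unfolding Q_def by blast
    qed
    finally have eq: "(\<Sum>i\<in>I. of_real (w i) * monomial j (p i)) = of_real (\<sigma> - of_nat m * \<beta>) * monomial j 0 +
        (\<Sum>k\<in>K'. (if j = 0 then of_real \<beta> else 0) + (if j = k then s k else 0))" .
    show ?thesis
    proof (cases "j = 0")
      case True
      have "0 \<notin> K'" unfolding K'_def by simp
      hence "(\<Sum>k\<in>K'. (if j = 0 then of_real \<beta> else 0) + (if j = k then s k else 0)) = of_nat m * of_real \<beta>"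
      proof -
        have "(\<Sum>k\<in>K'. (if j = 0 then of_real \<beta> else 0) + (if j = k then s k else 0)) = (\<Sum>k\<in>K'. (of_real \<beta> :: complex))"
          using True \<open>0 \<notin> K'\<close> by (intro sum.cong) auto
        thus ?thesis unfolding m_def by simp
      qed
      thus ?thesis using eq True s0 by (simp add: monomial_zero_idx)
    next
      case False
      hence "j \<in> K'" using j unfolding K'_def by simp
      hence "(\<Sum>k\<in>K'. (if j = 0 then of_real \<beta> else 0) + (if j = k then s k else 0)) = s j"
        using False finK' by simp
      thus ?thesis using eq False by (simp add: monomial_zero_pt)
    qed
  qed
  show ?thesis using finI wnn mom by blast
qed


lemma forward:
  fixes K :: "(nat ^ 'n::finite) set" and s :: "nat ^ 'n \<Rightarrow> complex"
  assumes K0: "0 \<in> K" and sol: "solves_moments K s \<mu>"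
  shows "(s 0 \<in> \<real> \<and> Re (s 0) > 0) \<or> (\<forall>k\<in>K. s k = 0)"
proof -
  have m0: "monomial (0 :: nat ^ 'n) = (\<lambda>_. 1)" by (rule ext) (simp add: monomial_def)
  have "integrable \<mu> (monomial (0 :: nat ^ 'n))" "integral\<^sup>L \<mu> (monomial (0 :: nat ^ 'n)) = s 0"
    using sol K0 unfolding solves_moments_def by auto
  hence int1: "integrable \<mu> (\<lambda>_. 1 :: complex)" and s0: "integral\<^sup>L \<mu> (\<lambda>_. 1 :: complex) = s 0"
    unfolding m0 by auto
  have s0': "s 0 = of_real (measure \<mu> (space \<mu>))" using s0 by (simp add: scaleR_conv_of_real)
  show ?thesis
  proof (cases "measure \<mu> (space \<mu>) > 0")
    case True thus ?thesis using s0' by simp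
  next
    case False
    hence m: "measure \<mu> (space \<mu>) = 0" using measure_nonneg[of \<mu> "space \<mu>"] by linarith
    have fin: "emeasure \<mu> (space \<mu>) < \<infinity>"
      using int1 unfolding integrable_iff_bounded by (simp add: nn_integral_const)
    hence "emeasure \<mu> (space \<mu>) = 0" using m by (simp add: emeasure_eq_ennreal_measure)
    hence null: "space \<mu> \<in> null_sets \<mu>" by auto
    have "s k = 0" if k: "k \<in> K" for k
    proof -
      have "AE x in \<mu>. monomial k x = 0" by (rule AE_I'[OF null]) auto
      hence "integral\<^sup>L \<mu> (monomial k) = 0" by (rule integral_eq_zero_AE)
      thus ?thesis using sol k unfolding solves_moments_def by auto
    qed
    thus ?thesis by blast
  qed
qed


lemma zero_case:
  fixes K :: "(nat ^ 'n::finite) set" and s :: "nat ^ 'n \<Rightarrow> complex"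
  assumes "\<And>k. k \<in> K \<Longrightarrow> s k = 0"
  shows "\<exists>\<mu>. solves_moments K s \<mu> \<and> compact (measure_support \<mu>)"
proof -
  have "\<And>k. k \<in> K \<Longrightarrow> (\<Sum>i\<in>({} :: nat set). of_real ((\<lambda>_. 0::real) i) * monomial k ((\<lambda>_. 0::complex^'n) i)) = s k"
    using assms by simp
  thus ?thesis by (intro discrete_measure[of "{} :: nat set" "\<lambda>_. 0::real" K "\<lambda>_. 0::complex^'n" s]) auto
qed

theorem theorem2p1:
  fixes K :: "(nat ^ 'n::finite) set" and s :: "nat ^ 'n \<Rightarrow> complex"
  assumes "finite K" and "0 \<in> K"
  shows "((\<exists>\<mu>. solves_moments K s \<mu>) \<longleftrightarrow>
           ((s 0 \<in> \<real> \<and> Re (s 0) > 0) \<or> (\<forall>k\<in>K. s k = 0)))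
       \<and> (((s 0 \<in> \<real> \<and> Re (s 0) > 0) \<or> (\<forall>k\<in>K. s k = 0)) \<longrightarrow>
           (\<exists>\<mu>. solves_moments K s \<mu> \<and> compact (measure_support \<mu>)))"
proof -
  have bk: "\<exists>\<mu>. solves_moments K s \<mu> \<and> compact (measure_support \<mu>)"
    if c: "(s 0 \<in> \<real> \<and> Re (s 0) > 0) \<or> (\<forall>k\<in>K. s k = 0)"
  proof (cases "\<forall>k\<in>K. s k = 0")
    case True
    show ?thesis
      by (rule zero_case) (use True in auto)
  next
    case False
    hence r: "s 0 \<in> \<real>" "Re (s 0) > 0" using c by auto
    have "s 0 = of_real (Re (s 0))" using r(1) by (simp add: complex_is_Real_iff complex_eq_iff)
    note ex = exists_discrete[where K=K and s=s and \<sigma>="Re (s 0)", OF assms(1) this r(2)]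
    obtain I :: "((nat ^ 'n) \<times> ('n \<Rightarrow> nat)) option set" and p :: "_ \<Rightarrow> complex ^ 'n" and w where
      h1: "finite I" and h2: "\<forall>i\<in>I. w i \<ge> (0::real)"
      and h3: "\<forall>j\<in>K. (\<Sum>i\<in>I. of_real (w i) * monomial j (p i)) = s j" using ex by blast
    show ?thesis
    proof (rule discrete_measure[where I=I and p=p and w=w and K=K and s=s])
      show "finite I" by (rule h1)
      show "\<And>i. i \<in> I \<Longrightarrow> 0 \<le> w i" using h2 by blast
      show "\<And>k. k \<in> K \<Longrightarrow> (\<Sum>i\<in>I. of_real (w i) * monomial k (p i)) = s k" using h3 by blast
    qed
  qed
  show ?thesis
  proof (intro conjI impI iffI)
    assume "\<exists>\<mu>. solves_moments K s \<mu>"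
    then obtain \<mu> where "solves_moments K s \<mu>" by (elim exE)
    thus "(s 0 \<in> \<real> \<and> Re (s 0) > 0) \<or> (\<forall>k\<in>K. s k = 0)" by (rule forward[OF assms(2)])
  next
    assume "(s 0 \<in> \<real> \<and> Re (s 0) > 0) \<or> (\<forall>k\<in>K. s k = 0)"
    from bk[OF this] show "\<exists>\<mu>. solves_moments K s \<mu>" by blast
  next
    assume "(s 0 \<in> \<real> \<and> Re (s 0) > 0) \<or> (\<forall>k\<in>K. s k = 0)"
    from bk[OF this] show "\<exists>\<mu>. solves_moments K s \<mu> \<and> compact (measure_support \<mu>)" .
  qed
qed

end
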